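(* Let $\mathfrak{C}$ be a class of languages closed under finite union, inverse gsm-mappings and intersection with regular languages (for example, the class of context-free languages). Let $S=\mathcal{S}[Y;S_\alpha;\phi_{\alpha,\beta}]$ be a strong semilattice of semigroups. Then $S$ is $U(\mathfrak{C})$ if and only if $S$ is finitely generated and every $S_\alpha$ ($\alpha\in Y$) is $U(\mathfrak{C})$.
   Context: For a semigroup $S$ generated by a finite set $A$, $\mathrm{WP}(S,A)=\{u\#v^{\mathrm{rev}} : u,v\in A^+,\ u=_S v\}$, where $\#\notin A$ and $v^{\mathrm{rev}}$ is the reversal of $v$. For a class of languages $\mathfrak{C}$, a semigroup is $U(\mathfrak{C})$ if it is finitely generated and its word problem with respect to some (equivalently any) finite generating set lies in $\mathfrak{C}$. Strong semilattice: $Y$ is a (meet) semilattice; for each $\alpha\in Y$, $S_\alpha$ is a semigroup; for $\alpha\ge\beta$, $\phi_{\alpha,\beta}:S_\alpha\to S_\beta$ is a homomorphism with $\phi_{\alpha,\alpha}$ the identity and $\phi_{\alpha,\beta}\phi_{\beta,\gamma}=\phi_{\alpha,\gamma}$ whenever $\alpha\ge\beta\ge\gamma$ (maps written on the right). $\mathcal{S}[Y;S_\alpha;\phi_{\alpha,\beta}]$ is the disjoint union $\bigcup_{\alpha\in Y}S_\alpha$ with product $xy=(x\phi_{\alpha,\alpha\wedge\beta})(y\phi_{\beta,\alpha\wedge\beta})$ for $x\in S_\alpha$, $y\in S_\beta$. *)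

theory Defs
  imports Main
begin

definition semigroup_on :: "'s set \<Rightarrow> ('s \<Rightarrow> 's \<Rightarrow> 's) \<Rightarrow> bool" where
  "semigroup_on S m \<longleftrightarrow>
     (\<forall>x\<in>S. \<forall>y\<in>S. m x y \<in> S) \<and>
     (\<forall>x\<in>S. \<forall>y\<in>S. \<forall>z\<in>S. m (m x y) z = m x (m y z))"

definition sgp_gen :: "'s set \<Rightarrow> ('s \<Rightarrow> 's \<Rightarrow> 's) \<Rightarrow> 's set \<Rightarrow> 's set" where
  "sgp_gen S m X = \<Inter>{T. X \<subseteq> T \<and> T \<subseteq> S \<and> (\<forall>x\<in>T. \<forall>y\<in>T. m x y \<in> T)}"

definition fin_gen :: "'s set \<Rightarrow> ('s \<Rightarrow> 's \<Rightarrow> 's) \<Rightarrow> bool" where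
  "fin_gen S m \<longleftrightarrow> (\<exists>X. finite X \<and> X \<subseteq> S \<and> sgp_gen S m X = S)"

fun word_val :: "('s \<Rightarrow> 's \<Rightarrow> 's) \<Rightarrow> (nat \<Rightarrow> 's) \<Rightarrow> nat list \<Rightarrow> 's" where
  "word_val m e [] = undefined"
| "word_val m e [a] = e a"
| "word_val m e (a # b # w) = m (e a) (word_val m e (b # w))"

text \<open>Word problem WP(S,A) with respect to the finite alphabet A (mapped injectively onto a
  generating set via e) and the separator letter h (playing the role of #, not in A).\<close>
definition word_problem :: "('s \<Rightarrow> 's \<Rightarrow> 's) \<Rightarrow> nat set \<Rightarrow> (nat \<Rightarrow> 's) \<Rightarrow> nat \<Rightarrow> nat list set" where
  "word_problem m A e h =
     {u @ [h] @ rev v | u v. u \<noteq> [] \<and> v \<noteq> [] \<and> set u \<subseteq> A \<and> set v \<subseteq> A \<and>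
                            word_val m e u = word_val m e v}"

definition regular_lang :: "nat list set \<Rightarrow> bool" where
  "regular_lang R \<longleftrightarrow>
     (\<exists>(\<Sigma>::nat set) (Q::nat set) (\<delta>::nat \<Rightarrow> nat \<Rightarrow> nat) q0 F.
        finite \<Sigma> \<and> finite Q \<and> q0 \<in> Q \<and> F \<subseteq> Q \<and>
        (\<forall>q\<in>Q. \<forall>a\<in>\<Sigma>. \<delta> q a \<in> Q) \<and>
        R = {w. set w \<subseteq> \<Sigma> \<and> foldl \<delta> q0 w \<in> F})"

text \<open>A (nondeterministic) generalized sequential machine (Hopcroft--Ullman):
  states Q, input alphabet Sigma, output alphabet Delta, transition/output relation delta,
  initial state q0, final states F.\<close>
definition is_gsm :: "nat set \<Rightarrow> nat set \<Rightarrow> nat set \<Rightarrow>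
    (nat \<Rightarrow> nat \<Rightarrow> (nat \<times> nat list) set) \<Rightarrow> nat \<Rightarrow> nat set \<Rightarrow> bool" where
  "is_gsm Q \<Sigma> \<Delta> \<delta> q0 F \<longleftrightarrow>
     finite Q \<and> finite \<Sigma> \<and> finite \<Delta> \<and> q0 \<in> Q \<and> F \<subseteq> Q \<and>
     (\<forall>q\<in>Q. \<forall>a\<in>\<Sigma>. finite (\<delta> q a) \<and> \<delta> q a \<subseteq> Q \<times> lists \<Delta>)"

inductive gsm_run :: "(nat \<Rightarrow> nat \<Rightarrow> (nat \<times> nat list) set) \<Rightarrow> nat \<Rightarrow> nat list \<Rightarrow> nat \<Rightarrow> nat list \<Rightarrow> bool"
  for \<delta> where
  run_nil: "gsm_run \<delta> q [] q []"
| run_cons: "(p, z) \<in> \<delta> q a \<Longrightarrow> gsm_run \<delta> p w q' y \<Longrightarrow> gsm_run \<delta> q (a # w) q' (z @ y)"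

definition gsm_inverse :: "nat set \<Rightarrow> (nat \<Rightarrow> nat \<Rightarrow> (nat \<times> nat list) set) \<Rightarrow> nat \<Rightarrow> nat set \<Rightarrow>
    nat list set \<Rightarrow> nat list set" where
  "gsm_inverse \<Sigma> \<delta> q0 F L =
     {x. set x \<subseteq> \<Sigma> \<and> (\<exists>q' y. q' \<in> F \<and> gsm_run \<delta> q0 x q' y \<and> y \<in> L)}"

definition closed_finite_union :: "nat list set set \<Rightarrow> bool" where
  "closed_finite_union Cl \<longleftrightarrow> (\<forall>L1\<in>Cl. \<forall>L2\<in>Cl. L1 \<union> L2 \<in> Cl)"

definition closed_inter_regular :: "nat list set set \<Rightarrow> bool" where
  "closed_inter_regular Cl \<longleftrightarrow> (\<forall>L\<in>Cl. \<forall>R. regular_lang R \<longrightarrow> L \<inter> R \<in> Cl)"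

definition closed_inverse_gsm :: "nat list set set \<Rightarrow> bool" where
  "closed_inverse_gsm Cl \<longleftrightarrow>
     (\<forall>L\<in>Cl. \<forall>Q \<Sigma> \<Delta> \<delta> q0 F. is_gsm Q \<Sigma> \<Delta> \<delta> q0 F \<longrightarrow> gsm_inverse \<Sigma> \<delta> q0 F L \<in> Cl)"

definition U_class :: "nat list set set \<Rightarrow> 's set \<Rightarrow> ('s \<Rightarrow> 's \<Rightarrow> 's) \<Rightarrow> bool" where
  "U_class Cl S m \<longleftrightarrow> semigroup_on S m \<and>
     (\<exists>(A::nat set) (e::nat \<Rightarrow> 's) (h::nat).
        finite A \<and> h \<notin> A \<and> inj_on e A \<and> e ` A \<subseteq> S \<and> sgp_gen S m (e ` A) = S \<and>
        word_problem m A e h \<in> Cl)"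

text \<open>Y is the whole (meet-)semilattice type 'y; component S_alpha has carrier Cs alpha and
  multiplication M alpha; phi alpha beta is the structure map (used for beta <= alpha).\<close>
definition strong_semilattice ::
    "('y::semilattice_inf \<Rightarrow> 'a set) \<Rightarrow> ('y \<Rightarrow> 'a \<Rightarrow> 'a \<Rightarrow> 'a) \<Rightarrow> ('y \<Rightarrow> 'y \<Rightarrow> 'a \<Rightarrow> 'a) \<Rightarrow> bool" where
  "strong_semilattice Cs M phi \<longleftrightarrow>
     (\<forall>\<alpha>. Cs \<alpha> \<noteq> {} \<and> semigroup_on (Cs \<alpha>) (M \<alpha>)) \<and>
     (\<forall>\<alpha> \<beta>. \<beta> \<le> \<alpha> \<longrightarrow>
        (\<forall>x\<in>Cs \<alpha>. phi \<alpha> \<beta> x \<in> Cs \<beta>) \<and>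
        (\<forall>x\<in>Cs \<alpha>. \<forall>y\<in>Cs \<alpha>. phi \<alpha> \<beta> (M \<alpha> x y) = M \<beta> (phi \<alpha> \<beta> x) (phi \<alpha> \<beta> y))) \<and>
     (\<forall>\<alpha>. \<forall>x\<in>Cs \<alpha>. phi \<alpha> \<alpha> x = x) \<and>
     (\<forall>\<alpha> \<beta> \<gamma>. \<beta> \<le> \<alpha> \<and> \<gamma> \<le> \<beta> \<longrightarrow> (\<forall>x\<in>Cs \<alpha>. phi \<beta> \<gamma> (phi \<alpha> \<beta> x) = phi \<alpha> \<gamma> x))"

definition ssl_carrier :: "('y \<Rightarrow> 'a set) \<Rightarrow> ('y \<times> 'a) set" where
  "ssl_carrier Cs = Sigma UNIV Cs"

definition ssl_mult ::
    "('y::semilattice_inf \<Rightarrow> 'a \<Rightarrow> 'a \<Rightarrow> 'a) \<Rightarrow> ('y \<Rightarrow> 'y \<Rightarrow> 'a \<Rightarrow> 'a) \<Rightarrow> 'y \<times> 'a \<Rightarrow> 'y \<times> 'a \<Rightarrow> 'y \<times> 'a" where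
  "ssl_mult M phi p q =
     (let \<alpha> = fst p; \<beta> = fst q; \<gamma> = inf \<alpha> \<beta>
      in (\<gamma>, M \<gamma> (phi \<alpha> \<gamma> (snd p)) (phi \<beta> \<gamma> (snd q))))"

end

theory Submission
  imports Defs
begin


lemma wv_cons: "w \<noteq> [] \<Longrightarrow> word_val m e (a # w) = m (e a) (word_val m e w)"
  by (cases w) auto

lemma wv_in:
  assumes "semigroup_on S m" "\<forall>a\<in>set u. e a \<in> S" "u \<noteq> []"
  shows "word_val m e u \<in> S"
  using assms(2,3)
proof (induction u)
  case (Cons a w)
  then show ?case using assms(1) by (cases w) (auto simp: semigroup_on_def)
qed simp

lemma wv_app:
  assumes "semigroup_on S m" "\<forall>a\<in>set (u@v). e a \<in> S" "u \<noteq> []" "v \<noteq> []"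
  shows "word_val m e (u @ v) = m (word_val m e u) (word_val m e v)"
  using assms(2,3)
proof (induction u)
  case (Cons a w)
  show ?case
  proof (cases "w = []")
    case True then show ?thesis using assms(4) by (simp add: wv_cons)
  next
    case False
    have "word_val m e (a # w @ v) = m (e a) (word_val m e (w @ v))"
      using assms(4) by (simp add: wv_cons)
    also have "\<dots> = m (e a) (m (word_val m e w) (word_val m e v))"
      using Cons False by simp
    also have "\<dots> = m (m (e a) (word_val m e w)) (word_val m e v)"
      using assms(1) Cons.prems False assms(4)
      by (simp add: semigroup_on_def wv_in)
    finally show ?thesis using False by (simp add: wv_cons)
  qed
qed simp

lemma wv_cong: "(\<forall>a\<in>set u. e a = e' a) \<Longrightarrow> word_val m e u = word_val m e' u"
  by (induction m e u rule: word_val.induct) auto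

lemma wv_concat:
  assumes "semigroup_on S m" "\<forall>a\<in>set u. z a \<noteq> [] \<and> (\<forall>b\<in>set (z a). e b \<in> S)" "u \<noteq> []"
  shows "word_val m e (concat (map z u)) = word_val m (\<lambda>a. word_val m e (z a)) u"
  using assms(2,3)
proof (induction u)
  case (Cons a w)
  show ?case
  proof (cases "w = []")
    case True then show ?thesis by simp
  next
    case False
    have ne: "concat (map z w) \<noteq> []" using False Cons.prems by (cases w) auto
    have "word_val m e (z a @ concat (map z w)) = m (word_val m e (z a)) (word_val m e (concat (map z w)))"
      by (rule wv_app[OF assms(1)]) (use Cons.prems ne in auto)
    then show ?thesis using Cons False by (simp add: wv_cons)
  qed
qed simp

lemma gen_words:
  assumes "semigroup_on S m" "e ` A \<subseteq> S"
  shows "sgp_gen S m (e ` A) = {word_val m e w | w. w \<noteq> [] \<and> set w \<subseteq> A}"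
proof
  let ?W = "{word_val m e w | w. w \<noteq> [] \<and> set w \<subseteq> A}"
  have "e ` A \<subseteq> ?W" by (auto intro!: exI[of _ "[x]" for x])
  moreover have "?W \<subseteq> S" using wv_in[OF assms(1)] assms(2) by blast
  moreover have "\<forall>x\<in>?W. \<forall>y\<in>?W. m x y \<in> ?W"
  proof (intro ballI)
    fix x y assume "x \<in> ?W" "y \<in> ?W"
    then obtain u v where "u \<noteq> []" "set u \<subseteq> A" "x = word_val m e u" "v \<noteq> []" "set v \<subseteq> A" "y = word_val m e v" by blast
    moreover have "\<forall>a\<in>set (u@v). e a \<in> S" using assms(2) \<open>set u \<subseteq> A\<close> \<open>set v \<subseteq> A\<close> by auto
    ultimately show "m x y \<in> ?W"
      using wv_app[OF assms(1), where e=e and u=u and v=v] by (auto intro!: exI[of _ "u@v"])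
  qed
  ultimately show "sgp_gen S m (e ` A) \<subseteq> ?W" unfolding sgp_gen_def by blast
next
  let ?W = "{word_val m e w | w. w \<noteq> [] \<and> set w \<subseteq> A}"
  show "?W \<subseteq> sgp_gen S m (e ` A)"
  proof
    fix x assume "x \<in> ?W"
    then obtain w where w: "w \<noteq> []" "set w \<subseteq> A" "x = word_val m e w" by blast
    have "\<forall>T. e ` A \<subseteq> T \<and> T \<subseteq> S \<and> (\<forall>x\<in>T. \<forall>y\<in>T. m x y \<in> T) \<longrightarrow> word_val m e w \<in> T"
      using w(1,2)
    proof (induction w)
      case (Cons a w)
      show ?case
      proof (intro allI impI)
        fix T assume T: "e ` A \<subseteq> T \<and> T \<subseteq> S \<and> (\<forall>x\<in>T. \<forall>y\<in>T. m x y \<in> T)"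
        have a: "e a \<in> T" using T Cons.prems by auto
        show "word_val m e (a # w) \<in> T"
        proof (cases "w = []")
          case True then show ?thesis using a by simp
        next
          case False
          then have "word_val m e w \<in> T" using Cons T by auto
          then show ?thesis using a T False by (simp add: wv_cons)
        qed
      qed
    qed simp
    then show "x \<in> sgp_gen S m (e ` A)" unfolding sgp_gen_def using w by blast
  qed
qed

locale ssl =
  fixes Cs :: "'y::semilattice_inf \<Rightarrow> 'a set" and M :: "'y \<Rightarrow> 'a \<Rightarrow> 'a \<Rightarrow> 'a"
    and phi :: "'y \<Rightarrow> 'y \<Rightarrow> 'a \<Rightarrow> 'a"
  assumes ss: "strong_semilattice Cs M phi"
begin

lemma ne: "Cs \<alpha> \<noteq> {}" and sg: "semigroup_on (Cs \<alpha>) (M \<alpha>)"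
  using ss by (auto simp: strong_semilattice_def)

lemma M_in: "x \<in> Cs \<alpha> \<Longrightarrow> y \<in> Cs \<alpha> \<Longrightarrow> M \<alpha> x y \<in> Cs \<alpha>"
  using sg by (auto simp: semigroup_on_def)

lemma M_assoc: "x \<in> Cs \<alpha> \<Longrightarrow> y \<in> Cs \<alpha> \<Longrightarrow> z \<in> Cs \<alpha> \<Longrightarrow> M \<alpha> (M \<alpha> x y) z = M \<alpha> x (M \<alpha> y z)"
  using sg by (auto simp: semigroup_on_def)

lemma phi_in: "\<beta> \<le> \<alpha> \<Longrightarrow> x \<in> Cs \<alpha> \<Longrightarrow> phi \<alpha> \<beta> x \<in> Cs \<beta>"
  using ss by (auto simp: strong_semilattice_def)

lemma phi_hom: "\<beta> \<le> \<alpha> \<Longrightarrow> x \<in> Cs \<alpha> \<Longrightarrow> y \<in> Cs \<alpha> \<Longrightarrow> phi \<alpha> \<beta> (M \<alpha> x y) = M \<beta> (phi \<alpha> \<beta> x) (phi \<alpha> \<beta> y)"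
  using ss by (auto simp: strong_semilattice_def)

lemma phi_id: "x \<in> Cs \<alpha> \<Longrightarrow> phi \<alpha> \<alpha> x = x"
  using ss by (auto simp: strong_semilattice_def)

lemma phi_comp: "\<beta> \<le> \<alpha> \<Longrightarrow> \<gamma> \<le> \<beta> \<Longrightarrow> x \<in> Cs \<alpha> \<Longrightarrow> phi \<beta> \<gamma> (phi \<alpha> \<beta> x) = phi \<alpha> \<gamma> x"
  using ss by (auto simp: strong_semilattice_def)

abbreviation "S \<equiv> ssl_carrier Cs"
abbreviation "mm \<equiv> ssl_mult M phi"

lemma mult_eq: "mm (\<alpha>, x) (\<beta>, y) = (inf \<alpha> \<beta>, M (inf \<alpha> \<beta>) (phi \<alpha> (inf \<alpha> \<beta>) x) (phi \<beta> (inf \<alpha> \<beta>) y))"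
  by (simp add: ssl_mult_def Let_def)

lemma mult_in: "p \<in> S \<Longrightarrow> q \<in> S \<Longrightarrow> mm p q \<in> S"
  by (cases p; cases q) (auto simp: ssl_carrier_def mult_eq intro!: M_in phi_in)

lemma triple: "\<gamma> \<le> \<beta> \<Longrightarrow> x \<in> Cs \<alpha> \<Longrightarrow> y \<in> Cs \<beta> \<Longrightarrow> \<beta> \<le> \<alpha> \<Longrightarrow> False \<Longrightarrow> True" by simp

lemma mult_phi:
  assumes "\<gamma> \<le> inf \<alpha> \<beta>" "x \<in> Cs \<alpha>" "y \<in> Cs \<beta>"
  shows "phi (inf \<alpha> \<beta>) \<gamma> (snd (mm (\<alpha>, x) (\<beta>, y))) = M \<gamma> (phi \<alpha> \<gamma> x) (phi \<beta> \<gamma> y)"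
proof -
  let ?d = "inf \<alpha> \<beta>"
  have "phi ?d \<gamma> (M ?d (phi \<alpha> ?d x) (phi \<beta> ?d y)) = M \<gamma> (phi ?d \<gamma> (phi \<alpha> ?d x)) (phi ?d \<gamma> (phi \<beta> ?d y))"
    using assms by (intro phi_hom phi_in) auto
  also have "\<dots> = M \<gamma> (phi \<alpha> \<gamma> x) (phi \<beta> \<gamma> y)"
    using assms by (simp add: phi_comp)
  finally show ?thesis by (simp add: mult_eq)
qed

lemma ssl_semigroup: "semigroup_on S mm"
  unfolding semigroup_on_def
proof (intro conjI ballI)
  fix p q assume "p \<in> S" "q \<in> S" then show "mm p q \<in> S" by (rule mult_in)
next
  fix p q r assume "p \<in> S" "q \<in> S" "r \<in> S"
  then obtain a x b y c z where p: "p = (a, x)" "x \<in> Cs a" and q: "q = (b, y)" "y \<in> Cs b"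
    and r: "r = (c, z)" "z \<in> Cs c" by (auto simp: ssl_carrier_def)
  let ?g = "inf (inf a b) c"
  have pq: "mm p q = (inf a b, snd (mm p q))" "snd (mm p q) \<in> Cs (inf a b)"
    using p q by (auto simp: mult_eq intro!: M_in phi_in)
  have qr: "mm q r = (inf b c, snd (mm q r))" "snd (mm q r) \<in> Cs (inf b c)"
    using r q by (auto simp: mult_eq intro!: M_in phi_in)
  have g: "?g = inf a (inf b c)" by (simp add: inf_assoc)
  have "mm (mm p q) r = (?g, M ?g (M ?g (phi a ?g x) (phi b ?g y)) (phi c ?g z))"
    using mult_phi[of ?g a b x y] p q pq r by (metis inf_le1 mult_eq)
  also have "\<dots> = (?g, M ?g (phi a ?g x) (M ?g (phi b ?g y) (phi c ?g z)))"
    using p q r by (simp add: M_assoc phi_in le_infI1 le_infI2)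
  also have "\<dots> = mm p (mm q r)"
    using mult_phi[of ?g b c y z] p q r qr g by (metis inf_le2 mult_eq)
  finally show "mm (mm p q) r = mm p (mm q r)" .
qed

lemma wv_S: "u \<noteq> [] \<Longrightarrow> \<forall>a\<in>set u. e a \<in> S \<Longrightarrow> word_val mm e u \<in> S"
  using wv_in[OF ssl_semigroup] by blast

lemma L_phi:
  assumes "u \<noteq> []" "\<forall>a\<in>set u. e a \<in> S"
  shows "(\<forall>\<beta>. \<beta> \<le> fst (word_val mm e u) \<longleftrightarrow> (\<forall>a\<in>set u. \<beta> \<le> fst (e a))) \<and>
    (\<forall>\<alpha>. \<alpha> \<le> fst (word_val mm e u) \<longrightarrow>
       phi (fst (word_val mm e u)) \<alpha> (snd (word_val mm e u)) = word_val (M \<alpha>) (\<lambda>a. phi (fst (e a)) \<alpha> (snd (e a))) u)"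
  using assms
proof (induction u)
  case (Cons a w)
  obtain b x where ea: "e a = (b, x)" "x \<in> Cs b" using Cons.prems by (cases "e a") (auto simp: ssl_carrier_def)
  show ?case
  proof (cases "w = []")
    case True then show ?thesis using ea by simp
  next
    case False
    have "word_val mm e w \<in> S" using wv_S[OF False] Cons.prems by auto
    then obtain c y where wv: "word_val mm e w = (c, y)" "y \<in> Cs c"
      by (cases "word_val mm e w") (auto simp: ssl_carrier_def)
    have IH: "\<forall>\<beta>. \<beta> \<le> c \<longleftrightarrow> (\<forall>a\<in>set w. \<beta> \<le> fst (e a))"
      "\<forall>\<alpha>. \<alpha> \<le> c \<longrightarrow> phi c \<alpha> y = word_val (M \<alpha>) (\<lambda>a. phi (fst (e a)) \<alpha> (snd (e a))) w"
      using Cons.IH False Cons.prems wv by auto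
    have eq: "word_val mm e (a # w) = mm (b, x) (c, y)" using False ea wv by (simp add: wv_cons)
    show ?thesis
    proof (intro conjI allI impI)
      fix \<beta> show "\<beta> \<le> fst (word_val mm e (a # w)) \<longleftrightarrow> (\<forall>a\<in>set (a # w). \<beta> \<le> fst (e a))"
        using IH(1) eq ea by (auto simp: mult_eq)
    next
      fix \<alpha> assume "\<alpha> \<le> fst (word_val mm e (a # w))"
      then have al: "\<alpha> \<le> inf b c" using eq by (simp add: mult_eq)
      have "phi (fst (word_val mm e (a # w))) \<alpha> (snd (word_val mm e (a # w))) = M \<alpha> (phi b \<alpha> x) (phi c \<alpha> y)"
        using eq mult_phi[OF al ea(2) wv(2)] by (simp add: mult_eq)
      also have "\<dots> = word_val (M \<alpha>) (\<lambda>a. phi (fst (e a)) \<alpha> (snd (e a))) (a # w)"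
        using IH(2) al False ea by (simp add: wv_cons)
      finally show "phi (fst (word_val mm e (a # w))) \<alpha> (snd (word_val mm e (a # w))) = word_val (M \<alpha>) (\<lambda>a. phi (fst (e a)) \<alpha> (snd (e a))) (a # w)" .
    qed
  qed
qed simp

lemma same_level:
  assumes "u \<noteq> []" "\<forall>a\<in>set u. e a = (\<alpha>, f a) \<and> f a \<in> Cs \<alpha>"
  shows "word_val mm e u = (\<alpha>, word_val (M \<alpha>) f u)"
  using assms
proof (induction u)
  case (Cons a w)
  show ?case
  proof (cases "w = []")
    case True then show ?thesis using Cons by simp
  next
    case False
    have "word_val (M \<alpha>) f w \<in> Cs \<alpha>" using wv_in[OF sg] False Cons.prems by auto
    then show ?thesis using Cons False by (simp add: wv_cons mult_eq phi_id)
  qed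
qed simp

end




lemma sep_unique:
  assumes "u1 @ h # w1 = u2 @ h # w2" "h \<notin> set u1" "h \<notin> set u2"
  shows "u1 = u2 \<and> w1 = w2"
  using assms
proof (induction u1 arbitrary: u2)
  case Nil then show ?case by (cases u2) auto
next
  case (Cons a u1) then show ?case by (cases u2) auto
qed

definition gsmd :: "nat set \<Rightarrow> nat \<Rightarrow> (nat \<Rightarrow> nat list) \<Rightarrow> nat \<Rightarrow> nat \<Rightarrow> nat \<Rightarrow> (nat \<times> nat list) set" where
  "gsmd P h z h2 q a = (if a \<in> P then (if q \<le> 1 then {(1, z a)} else if q \<le> 3 then {(3, rev (z a))} else {})
     else if a = h \<and> q = 1 then {(2, [h2])} else {})"

lemma R23:
  assumes "gsm_run (gsmd P h z h2) q x q' y" "q \<in> {2,3}"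
  shows "set x \<subseteq> P \<and> y = concat (map (\<lambda>a. rev (z a)) x) \<and> q' = (if x = [] then q else 3)"
  using assms
  by (induction rule: gsm_run.induct) (auto simp: gsmd_def split: if_splits)

lemma R01:
  assumes "gsm_run (gsmd P h z h2) q x q' y" "q \<in> {0,1}" "q' = 3" "h \<notin> P"
  shows "\<exists>u v. x = u @ h # v \<and> set u \<subseteq> P \<and> (q = 1 \<or> u \<noteq> []) \<and> v \<noteq> [] \<and> set v \<subseteq> P \<and>
      y = concat (map z u) @ [h2] @ concat (map (\<lambda>a. rev (z a)) v)"
  using assms
proof (induction rule: gsm_run.induct)
  case (run_nil q) then show ?case by auto
next
  case (run_cons p zz q a w q' y)
  show ?case
  proof (cases "a \<in> P")
    case True
    then have "p = 1" "zz = z a" using run_cons by (auto simp: gsmd_def)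
    then have "\<exists>u v. w = u @ h # v \<and> set u \<subseteq> P \<and> (p = 1 \<or> u \<noteq> []) \<and> v \<noteq> [] \<and> set v \<subseteq> P \<and>
      y = concat (map z u) @ [h2] @ concat (map (\<lambda>a. rev (z a)) v)" using run_cons.IH run_cons.prems by simp
    then obtain u v where "w = u @ h # v \<and> set u \<subseteq> P \<and> v \<noteq> [] \<and> set v \<subseteq> P \<and>
      y = concat (map z u) @ [h2] @ concat (map (\<lambda>a. rev (z a)) v)" by blast
    then show ?thesis using True \<open>zz = z a\<close> by (intro exI[of _ "a # u"] exI[of _ v]) simp
  next
    case False
    then have "a = h" "q = 1" "p = 2" "zz = [h2]" using run_cons by (auto simp: gsmd_def split: if_splits)
    then have "set w \<subseteq> P \<and> y = concat (map (\<lambda>a. rev (z a)) w) \<and> q' = (if w = [] then 2 else 3)"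
      using R23[OF run_cons(2)] by auto
    then show ?thesis using run_cons \<open>a = h\<close> \<open>q = 1\<close> \<open>zz = [h2]\<close>
      by (intro exI[of _ "[]"] exI[of _ w]) (auto split: if_splits)
  qed
qed

lemma C23:
  assumes "set v \<subseteq> P" "q \<in> {2,3}"
  shows "gsm_run (gsmd P h z h2) q v (if v = [] then q else 3) (concat (map (\<lambda>a. rev (z a)) v))"
  using assms
proof (induction v arbitrary: q)
  case Nil then show ?case by (simp add: run_nil)
next
  case (Cons a v)
  have "(3, rev (z a)) \<in> gsmd P h z h2 q a" using Cons.prems by (auto simp: gsmd_def)
  moreover have "gsm_run (gsmd P h z h2) 3 v 3 (concat (map (\<lambda>a. rev (z a)) v))"
    using Cons.IH[of 3] Cons.prems by (auto split: if_splits)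
  ultimately show ?case using run_cons by fastforce
qed

lemma C1:
  assumes "set u \<subseteq> P" "h \<notin> P" "v \<noteq> []" "set v \<subseteq> P"
  shows "gsm_run (gsmd P h z h2) 1 (u @ h # v) 3 (concat (map z u) @ [h2] @ concat (map (\<lambda>a. rev (z a)) v))"
  using assms(1)
proof (induction u)
  case Nil
  have "(2, [h2]) \<in> gsmd P h z h2 1 h" using assms by (auto simp: gsmd_def)
  moreover have "gsm_run (gsmd P h z h2) 2 v 3 (concat (map (\<lambda>a. rev (z a)) v))"
    using C23[OF assms(4), of 2] assms(3) by simp
  ultimately show ?case using run_cons by fastforce
next
  case (Cons a u)
  have "(1, z a) \<in> gsmd P h z h2 1 a" using Cons.prems by (auto simp: gsmd_def)
  then show ?case using run_cons[OF _ Cons.IH] Cons.prems by fastforce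
qed

lemma gsm_main:
  assumes "finite A" "h \<notin> A" "P \<subseteq> A" "\<forall>a\<in>P. z a \<noteq> [] \<and> set (z a) \<subseteq> A2" "finite A2" "h2 \<notin> A2"
  shows "is_gsm {0,1,2,3} (insert h A) (insert h2 A2) (gsmd P h z h2) 0 {3}"
    and "gsm_inverse (insert h A) (gsmd P h z h2) 0 {3} (word_problem m A2 e h2) =
      {u @ [h] @ rev v | u v. u \<noteq> [] \<and> v \<noteq> [] \<and> set u \<subseteq> P \<and> set v \<subseteq> P \<and>
         word_val m e (concat (map z u)) = word_val m e (concat (map z v))}"
proof -
  show "is_gsm {0,1,2,3} (insert h A) (insert h2 A2) (gsmd P h z h2) 0 {3}"
    using assms unfolding is_gsm_def gsmd_def by (auto simp: set_rev subset_iff)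
next
  have hP: "h \<notin> P" using assms by auto
  have zc: "concat (map (\<lambda>a. rev (z a)) (rev v)) = rev (concat (map z v))" for v
    by (induction v) auto
  have Zset: "set u \<subseteq> P \<Longrightarrow> set (concat (map z u)) \<subseteq> A2" for u using assms(4) by auto
  have Zne: "u \<noteq> [] \<Longrightarrow> set u \<subseteq> P \<Longrightarrow> concat (map z u) \<noteq> []" for u using assms(4) by (cases u) auto
  show "gsm_inverse (insert h A) (gsmd P h z h2) 0 {3} (word_problem m A2 e h2) =
      {u @ [h] @ rev v | u v. u \<noteq> [] \<and> v \<noteq> [] \<and> set u \<subseteq> P \<and> set v \<subseteq> P \<and>
         word_val m e (concat (map z u)) = word_val m e (concat (map z v))}" (is "?L = ?R")
  proof
    show "?L \<subseteq> ?R"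
    proof
      fix x assume "x \<in> ?L"
      then obtain y where run: "gsm_run (gsmd P h z h2) 0 x 3 y" and yW: "y \<in> word_problem m A2 e h2"
        unfolding gsm_inverse_def by auto
      obtain u v where uv: "x = u @ h # v" "set u \<subseteq> P" "u \<noteq> []" "v \<noteq> []" "set v \<subseteq> P"
        "y = concat (map z u) @ [h2] @ concat (map (\<lambda>a. rev (z a)) v)"
        using R01[OF run _ _ hP] by auto
      obtain u' v' where y: "y = u' @ [h2] @ rev v'" "u' \<noteq> []" "v' \<noteq> []" "set u' \<subseteq> A2" "set v' \<subseteq> A2"
        "word_val m e u' = word_val m e v'"
        using yW unfolding word_problem_def by blast
      have "concat (map z u) @ h2 # concat (map (\<lambda>a. rev (z a)) v) = u' @ h2 # rev v'" using uv y by simp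
      then have "concat (map z u) = u'" "concat (map (\<lambda>a. rev (z a)) v) = rev v'"
        using sep_unique[of "concat (map z u)" h2] Zset[OF uv(2)] y(4) assms(6) by blast+
      moreover have "concat (map (\<lambda>a. rev (z a)) v) = rev (concat (map z (rev v)))" using zc[of "rev v"] by simp
      ultimately have "concat (map z (rev v)) = v'" by simp
      then show "x \<in> ?R" using uv y \<open>concat (map z u) = u'\<close>
        by (intro CollectI exI[of _ u] exI[of _ "rev v"]) auto
    qed
  next
    show "?R \<subseteq> ?L"
    proof
      fix x assume "x \<in> ?R"
      then obtain u v where uv: "x = u @ [h] @ rev v" "u \<noteq> []" "v \<noteq> []" "set u \<subseteq> P" "set v \<subseteq> P"
        "word_val m e (concat (map z u)) = word_val m e (concat (map z v))" by blast
      obtain a u1 where u: "u = a # u1" using uv by (cases u) auto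
      have r1: "gsm_run (gsmd P h z h2) 1 (u1 @ h # rev v) 3 (concat (map z u1) @ [h2] @ concat (map (\<lambda>a. rev (z a)) (rev v)))"
        using C1[of u1 P h "rev v" z h2] uv u hP by auto
      have "(1, z a) \<in> gsmd P h z h2 0 a" using uv u by (auto simp: gsmd_def)
      then have run: "gsm_run (gsmd P h z h2) 0 x 3 (concat (map z u) @ [h2] @ rev (concat (map z v)))"
        using run_cons[OF _ r1] uv u zc by fastforce
      have "concat (map z u) @ [h2] @ rev (concat (map z v)) \<in> word_problem m A2 e h2"
        unfolding word_problem_def using uv Zset Zne by blast
      moreover have "set x \<subseteq> insert h A" using uv assms(3) by auto
      ultimately show "x \<in> ?L" using run unfolding gsm_inverse_def by blast
    qed
  qed
qed




definition dfad :: "nat set \<Rightarrow> nat \<Rightarrow> nat \<Rightarrow> nat \<Rightarrow> nat" where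
  "dfad P h q a = (if a = h then (if q = 1 then 2 else 4)
     else if q = 0 then (if a \<in> P then 1 else 0) else if q = 1 then 1
     else if q = 2 then (if a \<in> P then 3 else 2) else if q = 3 then 3 else 4)"

lemma dfa01: "set u \<subseteq> A \<Longrightarrow> h \<notin> A \<Longrightarrow> q \<in> {0,1} \<Longrightarrow>
  foldl (dfad P h) q u = (if q = 1 \<or> (\<exists>a\<in>set u. a \<in> P) then 1 else 0)"
  by (induction u arbitrary: q) (auto simp: dfad_def)

lemma dfa23: "set u \<subseteq> A \<Longrightarrow> h \<notin> A \<Longrightarrow> q \<in> {2,3} \<Longrightarrow>
  foldl (dfad P h) q u = (if q = 3 \<or> (\<exists>a\<in>set u. a \<in> P) then 3 else 2)"
  by (induction u arbitrary: q) (auto simp: dfad_def)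

lemma dfa_reg: "finite A \<Longrightarrow> regular_lang {w. set w \<subseteq> insert h A \<and> foldl (dfad P h) 0 w \<in> {3}}"
  unfolding regular_lang_def
  by (rule exI[of _ "insert h A"], rule exI[of _ "{0,1,2,3,4}"], rule exI[of _ "dfad P h"],
      rule exI[of _ 0], rule exI[of _ "{3}"]) (auto simp: dfad_def)

lemma dfa_mem:
  assumes "set u \<subseteq> A" "set v \<subseteq> A" "h \<notin> A"
  shows "u @ [h] @ v \<in> {w. set w \<subseteq> insert h A \<and> foldl (dfad P h) 0 w \<in> {3}} \<longleftrightarrow>
    (\<exists>a\<in>set u. a \<in> P) \<and> (\<exists>a\<in>set v. a \<in> P)"
proof -
  have "foldl (dfad P h) 0 (u @ [h] @ v) = foldl (dfad P h) (dfad P h (foldl (dfad P h) 0 u) h) v" by simp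
  also have "\<dots> = (if (\<exists>a\<in>set u. a \<in> P) then foldl (dfad P h) 2 v else foldl (dfad P h) 4 v)"
    using dfa01[OF assms(1,3), of 0 P] by (simp add: dfad_def)
  finally have eq: "foldl (dfad P h) 0 (u @ [h] @ v) = (if (\<exists>a\<in>set u. a \<in> P) then foldl (dfad P h) 2 v else foldl (dfad P h) 4 v)" .
  have f4: "foldl (dfad P h) 4 w = 4" for w by (induction w) (auto simp: dfad_def)
  show ?thesis using eq f4 dfa23[OF assms(2,3), of 2 P] assms by auto
qed

lemma union_fin:
  assumes "closed_finite_union Cl" "finite I" "I \<noteq> {}" "\<forall>i\<in>I. L i \<in> Cl"
  shows "(\<Union>i\<in>I. L i) \<in> Cl"
  using assms(2,3,4)
proof (induction I rule: finite_ne_induct)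
  case (insert x F) then show ?case using assms(1) by (simp add: closed_finite_union_def)
qed simp

lemma inter_fin:
  assumes "closed_inter_regular Cl" "finite I" "L \<in> Cl" "\<forall>i\<in>I. regular_lang (R i)"
  shows "L \<inter> (\<Inter>i\<in>I. R i) \<in> Cl"
  using assms(2,4)
proof (induction I rule: finite_induct)
  case (insert x F)
  then have "(L \<inter> (\<Inter>i\<in>F. R i)) \<inter> R x \<in> Cl" using assms(1) by (simp add: closed_inter_regular_def)
  then show ?case by (simp add: Int_ac)
qed (simp add: assms(3))

context ssl
begin

lemma fwd:
  assumes cg: "closed_inverse_gsm Cl" and U: "U_class Cl S mm"
  shows "fin_gen S mm \<and> U_class Cl (Cs \<alpha>) (M \<alpha>)"
proof -
  obtain A e h where A: "finite A" "h \<notin> A" "inj_on e A" "e ` A \<subseteq> S" "sgp_gen S mm (e ` A) = S"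
    "word_problem mm A e h \<in> Cl" using U unfolding U_class_def by blast
  have fg: "fin_gen S mm" unfolding fin_gen_def using A by blast
  have words: "S = {word_val mm e w | w. w \<noteq> [] \<and> set w \<subseteq> A}"
    using gen_words[OF ssl_semigroup A(4)] A(5) by simp
  have wordsI: "\<exists>w. w \<noteq> [] \<and> set w \<subseteq> A \<and> word_val mm e w = p" if "p \<in> S" for p
  proof -
    have "p \<in> {word_val mm e w | w. w \<noteq> [] \<and> set w \<subseteq> A}" using that by (simp only: words)
    then show ?thesis by blast
  qed
  define P where "P = {a\<in>A. \<alpha> \<le> fst (e a)}"
  define f where "f a = phi (fst (e a)) \<alpha> (snd (e a))" for a
  define B where "B = f ` P"
  have eS: "a \<in> A \<Longrightarrow> snd (e a) \<in> Cs (fst (e a))" for a using A(4) by (auto simp: ssl_carrier_def)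
  have finB: "finite B" using A(1) by (simp add: B_def P_def)
  have BC: "B \<subseteq> Cs \<alpha>" using eS by (auto simp: B_def P_def f_def intro!: phi_in)
  obtain g where g: "bij_betw g {0..<card B} B" using ex_bij_betw_nat_finite[OF finB] by blast
  define A' where "A' = {0..<card B}"
  have gA: "g ` A' = B" "inj_on g A'" using g by (auto simp: A'_def bij_betw_def)
  have gen: "sgp_gen (Cs \<alpha>) (M \<alpha>) (g ` A') = Cs \<alpha>"
  proof -
    have fP: "f ` P \<subseteq> Cs \<alpha>" using BC B_def by simp
    have W: "sgp_gen (Cs \<alpha>) (M \<alpha>) (g ` A') = {word_val (M \<alpha>) f w | w. w \<noteq> [] \<and> set w \<subseteq> P}"
      using gen_words[OF sg fP] gA B_def by simp
    have "Cs \<alpha> \<subseteq> {word_val (M \<alpha>) f w | w. w \<noteq> [] \<and> set w \<subseteq> P}"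
    proof
      fix x assume x: "x \<in> Cs \<alpha>"
      then have "(\<alpha>, x) \<in> S" by (simp add: ssl_carrier_def)
      then obtain u where u: "u \<noteq> []" "set u \<subseteq> A" "word_val mm e u = (\<alpha>, x)" using wordsI by blast
      have eu: "\<forall>a\<in>set u. e a \<in> S" using u A(4) by auto
      note L = L_phi[OF u(1) eu]
      have "\<forall>a\<in>set u. \<alpha> \<le> fst (e a)" using L u(3) by auto
      then have "set u \<subseteq> P" using u(2) by (auto simp: P_def)
      moreover have "x = word_val (M \<alpha>) f u"
      proof -
        have "x = phi \<alpha> \<alpha> x" by (simp add: phi_id x)
        also have "\<dots> = word_val (M \<alpha>) (\<lambda>a. phi (fst (e a)) \<alpha> (snd (e a))) u" using L u(3) by simp
        also have "\<dots> = word_val (M \<alpha>) f u" by (rule wv_cong) (simp add: f_def)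
        finally show ?thesis .
      qed
      ultimately show "x \<in> {word_val (M \<alpha>) f w | w. w \<noteq> [] \<and> set w \<subseteq> P}" using u by blast
    qed
    moreover have "sgp_gen (Cs \<alpha>) (M \<alpha>) (g ` A') \<subseteq> Cs \<alpha>" unfolding sgp_gen_def
      by (rule Inter_lower) (use BC gA M_in in auto)
    ultimately show ?thesis using W by blast
  qed
  have zex: "\<forall>b\<in>A'. \<exists>w. w \<noteq> [] \<and> set w \<subseteq> A \<and> word_val mm e w = (\<alpha>, g b)"
  proof
    fix b assume "b \<in> A'"
    then have "(\<alpha>, g b) \<in> S" using gA BC by (auto simp: ssl_carrier_def)
    then show "\<exists>w. w \<noteq> [] \<and> set w \<subseteq> A \<and> word_val mm e w = (\<alpha>, g b)" by (rule wordsI)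
  qed
  define z where "z b = (SOME w. w \<noteq> [] \<and> set w \<subseteq> A \<and> word_val mm e w = (\<alpha>, g b))" for b
  have z: "b \<in> A' \<Longrightarrow> z b \<noteq> [] \<and> set (z b) \<subseteq> A \<and> word_val mm e (z b) = (\<alpha>, g b)" for b
    unfolding z_def using someI_ex[OF zex[rule_format, of b]] by simp
  have h': "card B \<notin> A'" by (simp add: A'_def)
  have finA': "finite A'" by (simp add: A'_def)
  have G1: "is_gsm {0,1,2,3} (insert (card B) A') (insert h A) (gsmd A' (card B) z h) 0 {3}"
   and G2: "gsm_inverse (insert (card B) A') (gsmd A' (card B) z h) 0 {3} (word_problem mm A e h) =
      {u @ [card B] @ rev v | u v. u \<noteq> [] \<and> v \<noteq> [] \<and> set u \<subseteq> A' \<and> set v \<subseteq> A' \<and>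
         word_val mm e (concat (map z u)) = word_val mm e (concat (map z v))}"
    using gsm_main(1)[OF finA' h' subset_refl _ A(1) A(2), where z=z] gsm_main(2)[OF finA' h' subset_refl _ A(1) A(2), where z=z and m=mm and e=e] z by auto
  have val: "u \<noteq> [] \<Longrightarrow> set u \<subseteq> A' \<Longrightarrow> word_val mm e (concat (map z u)) = (\<alpha>, word_val (M \<alpha>) g u)" for u
  proof -
    assume u: "u \<noteq> []" "set u \<subseteq> A'"
    have "word_val mm e (concat (map z u)) = word_val mm (\<lambda>b. word_val mm e (z b)) u"
      by (rule wv_concat[OF ssl_semigroup]) (use u z A(4) in blast)+
    also have "\<dots> = word_val mm (\<lambda>b. (\<alpha>, g b)) u" using u z by (intro wv_cong) auto
    also have "\<dots> = (\<alpha>, word_val (M \<alpha>) g u)" using u gA BC by (intro same_level) auto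
    finally show ?thesis .
  qed
  have key: "\<And>u v. u \<noteq> [] \<Longrightarrow> v \<noteq> [] \<Longrightarrow> set u \<subseteq> A' \<Longrightarrow> set v \<subseteq> A' \<Longrightarrow>
     (word_val (M \<alpha>) g u = word_val (M \<alpha>) g v) = (word_val mm e (concat (map z u)) = word_val mm e (concat (map z v)))"
    using val by simp
  have "word_problem (M \<alpha>) A' g (card B) = {u @ [card B] @ rev v | u v. u \<noteq> [] \<and> v \<noteq> [] \<and> set u \<subseteq> A' \<and> set v \<subseteq> A' \<and>
         word_val mm e (concat (map z u)) = word_val mm e (concat (map z v))}"
    unfolding word_problem_def
  proof (intro Collect_cong)
    fix x show "(\<exists>u v. x = u @ [card B] @ rev v \<and> u \<noteq> [] \<and> v \<noteq> [] \<and> set u \<subseteq> A' \<and> set v \<subseteq> A' \<and> word_val (M \<alpha>) g u = word_val (M \<alpha>) g v) =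
      (\<exists>u v. x = u @ [card B] @ rev v \<and> u \<noteq> [] \<and> v \<noteq> [] \<and> set u \<subseteq> A' \<and> set v \<subseteq> A' \<and>
         word_val mm e (concat (map z u)) = word_val mm e (concat (map z v)))"
      using key by blast
  qed
  also have "\<dots> = gsm_inverse (insert (card B) A') (gsmd A' (card B) z h) 0 {3} (word_problem mm A e h)"
    using G2 by simp
  finally have "word_problem (M \<alpha>) A' g (card B) = gsm_inverse (insert (card B) A') (gsmd A' (card B) z h) 0 {3} (word_problem mm A e h)" .
  then have "word_problem (M \<alpha>) A' g (card B) \<in> Cl"
    using cg G1 A(6) unfolding closed_inverse_gsm_def by simp
  then have "U_class Cl (Cs \<alpha>) (M \<alpha>)"
    unfolding U_class_def using sg finA' h' gA gen BC by blast
  then show ?thesis using fg by blast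
qed

end



context ssl
begin

lemma fst_det:
  assumes "u \<noteq> []" "w \<noteq> []" "\<forall>a\<in>set u. e a \<in> S" "set w = set u"
  shows "fst (word_val mm e w) = fst (word_val mm e u)"
proof -
  have ew: "\<forall>a\<in>set w. e a \<in> S" using assms by simp
  have Lu: "\<forall>\<beta>. \<beta> \<le> fst (word_val mm e u) \<longleftrightarrow> (\<forall>a\<in>set u. \<beta> \<le> fst (e a))" using L_phi[OF assms(1,3)] by blast
  have Lw: "\<forall>\<beta>. \<beta> \<le> fst (word_val mm e w) \<longleftrightarrow> (\<forall>a\<in>set u. \<beta> \<le> fst (e a))" using L_phi[OF assms(2) ew] assms(4) by simp
  have 1: "fst (word_val mm e u) \<le> fst (word_val mm e w)" using Lu Lw by blast
  have 2: "fst (word_val mm e w) \<le> fst (word_val mm e u)" using Lu Lw by blast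
  show ?thesis using 1 2 by (rule order.antisym[rotated])
qed

lemma bwd:
  assumes cu: "closed_finite_union Cl" and cg: "closed_inverse_gsm Cl" and ci: "closed_inter_regular Cl"
    and fg: "fin_gen S mm" and Us: "\<forall>\<alpha>. U_class Cl (Cs \<alpha>) (M \<alpha>)"
  shows "U_class Cl S mm"
proof -
  obtain X where X: "finite X" "X \<subseteq> S" "sgp_gen S mm X = S" using fg unfolding fin_gen_def by blast
  obtain e where e: "bij_betw e {0..<card X} X" using ex_bij_betw_nat_finite[OF X(1)] by blast
  define A where "A = {0..<card X}"
  define h where "h = card X"
  have eA: "e ` A = X" "inj_on e A" using e by (auto simp: A_def bij_betw_def)
  have finA: "finite A" and hA: "h \<notin> A" by (auto simp: A_def h_def)
  have eS: "e ` A \<subseteq> S" using eA X by simp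
  have words: "S = {word_val mm e w | w. w \<noteq> [] \<and> set w \<subseteq> A}"
    using gen_words[OF ssl_semigroup eS] X(3) eA by simp
  have wordsI: "\<exists>w. w \<noteq> [] \<and> set w \<subseteq> A \<and> word_val mm e w = p" if "p \<in> S" for p
  proof -
    have "p \<in> {word_val mm e w | w. w \<noteq> [] \<and> set w \<subseteq> A}" using that by (simp only: words)
    then show ?thesis by blast
  qed
  have eSu: "set u \<subseteq> A \<Longrightarrow> \<forall>a\<in>set u. e a \<in> S" for u using eS by auto
  define G where "G T = fst (word_val mm e (SOME w. w \<noteq> [] \<and> set w = T))" for T
  have finY: "finite (UNIV :: 'y set)"
  proof -
    have "UNIV \<subseteq> G ` Pow A"
    proof
      fix \<alpha> :: 'y
      obtain x where x: "x \<in> Cs \<alpha>" using ne by blast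
      then have "(\<alpha>, x) \<in> S" by (simp add: ssl_carrier_def)
      then obtain u where u: "u \<noteq> []" "set u \<subseteq> A" "word_val mm e u = (\<alpha>, x)" using wordsI by blast
      define w where "w = (SOME w. w \<noteq> [] \<and> set w = set u)"
      have w: "w \<noteq> [] \<and> set w = set u" unfolding w_def by (rule someI[of _ u]) (use u in simp)
      have "G (set u) = fst (word_val mm e w)" by (simp add: G_def w_def)
      also have "\<dots> = \<alpha>" using fst_det[OF u(1) _ eSu[OF u(2)]] w u(3) by simp
      finally show "\<alpha> \<in> G ` Pow A" using u(2) by blast
    qed
    then show ?thesis by (rule finite_subset[OF _ finite_imageI]) (use finA in simp)
  qed
  have "\<exists>A2 e2 h2. finite A2 \<and> h2 \<notin> A2 \<and> e2 ` A2 \<subseteq> Cs \<alpha> \<and>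
      sgp_gen (Cs \<alpha>) (M \<alpha>) (e2 ` A2) = Cs \<alpha> \<and> word_problem (M \<alpha>) A2 e2 h2 \<in> Cl" for \<alpha>
  proof -
    have "U_class Cl (Cs \<alpha>) (M \<alpha>)" using Us by simp
    then obtain A2 e2 h2 where "finite A2 \<and> h2 \<notin> A2 \<and> inj_on e2 A2 \<and> e2 ` A2 \<subseteq> Cs \<alpha> \<and> sgp_gen (Cs \<alpha>) (M \<alpha>) (e2 ` A2) = Cs \<alpha> \<and>
        word_problem (M \<alpha>) A2 e2 h2 \<in> Cl" unfolding U_class_def by (elim conjE exE) (rule that, (intro conjI; assumption))
    then show ?thesis by (intro exI) (elim conjE, intro conjI)
  qed
  then have "\<forall>\<alpha>. \<exists>A2 e2 h2. finite A2 \<and> h2 \<notin> A2 \<and> e2 ` A2 \<subseteq> Cs \<alpha> \<and>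
      sgp_gen (Cs \<alpha>) (M \<alpha>) (e2 ` A2) = Cs \<alpha> \<and> word_problem (M \<alpha>) A2 e2 h2 \<in> Cl" by blast
  then obtain A2 e2 h2 where F2all: "\<forall>\<alpha>. finite (A2 \<alpha>) \<and> h2 \<alpha> \<notin> A2 \<alpha> \<and> e2 \<alpha> ` A2 \<alpha> \<subseteq> Cs \<alpha> \<and>
      sgp_gen (Cs \<alpha>) (M \<alpha>) (e2 \<alpha> ` A2 \<alpha>) = Cs \<alpha> \<and> word_problem (M \<alpha>) (A2 \<alpha>) (e2 \<alpha>) (h2 \<alpha>) \<in> Cl"
    by metis
  have F2: "finite (A2 \<alpha>)" "h2 \<alpha> \<notin> A2 \<alpha>" "e2 \<alpha> ` A2 \<alpha> \<subseteq> Cs \<alpha>" "sgp_gen (Cs \<alpha>) (M \<alpha>) (e2 \<alpha> ` A2 \<alpha>) = Cs \<alpha>"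
    "word_problem (M \<alpha>) (A2 \<alpha>) (e2 \<alpha>) (h2 \<alpha>) \<in> Cl" for \<alpha>
    using F2all by auto
  have words2: "\<exists>w. w \<noteq> [] \<and> set w \<subseteq> A2 \<alpha> \<and> word_val (M \<alpha>) (e2 \<alpha>) w = x" if "x \<in> Cs \<alpha>" for \<alpha> x
  proof -
    have "Cs \<alpha> = {word_val (M \<alpha>) (e2 \<alpha>) w | w. w \<noteq> [] \<and> set w \<subseteq> A2 \<alpha>}"
      using gen_words[OF sg F2(3)] F2(4) by simp
    then have "x \<in> {word_val (M \<alpha>) (e2 \<alpha>) w | w. w \<noteq> [] \<and> set w \<subseteq> A2 \<alpha>}" using that by (simp only:)
    then show ?thesis by blast
  qed
  define P where "P \<alpha> = {a\<in>A. \<alpha> \<le> fst (e a)}" for \<alpha>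
  define f where "f \<alpha> a = phi (fst (e a)) \<alpha> (snd (e a))" for \<alpha> a
  have fC: "a \<in> P \<alpha> \<Longrightarrow> f \<alpha> a \<in> Cs \<alpha>" for a \<alpha>
    using eS by (auto simp: P_def f_def ssl_carrier_def intro!: phi_in)
  define z where "z \<alpha> a = (SOME w. w \<noteq> [] \<and> set w \<subseteq> A2 \<alpha> \<and> word_val (M \<alpha>) (e2 \<alpha>) w = f \<alpha> a)" for \<alpha> a
  have z: "a \<in> P \<alpha> \<Longrightarrow> z \<alpha> a \<noteq> [] \<and> set (z \<alpha> a) \<subseteq> A2 \<alpha> \<and> word_val (M \<alpha>) (e2 \<alpha>) (z \<alpha> a) = f \<alpha> a" for a \<alpha>
    unfolding z_def using someI_ex[OF words2[OF fC]] by simp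
  have PA: "P \<alpha> \<subseteq> A" for \<alpha> by (auto simp: P_def)
  have zP: "\<forall>a\<in>P \<alpha>. z \<alpha> a \<noteq> [] \<and> set (z \<alpha> a) \<subseteq> A2 \<alpha>" for \<alpha> using z by blast
  define K where "K \<alpha> = gsm_inverse (insert h A) (gsmd (P \<alpha>) h (z \<alpha>) (h2 \<alpha>)) 0 {3} (word_problem (M \<alpha>) (A2 \<alpha>) (e2 \<alpha>) (h2 \<alpha>))" for \<alpha>
  have KCl: "K \<alpha> \<in> Cl" for \<alpha>
    unfolding K_def by (rule cg[unfolded closed_inverse_gsm_def, rule_format, OF F2(5) gsm_main(1)[OF finA hA PA zP F2(1) F2(2)]])
  have Keq: "K \<alpha> = {u @ [h] @ rev v | u v. u \<noteq> [] \<and> v \<noteq> [] \<and> set u \<subseteq> P \<alpha> \<and> set v \<subseteq> P \<alpha> \<and>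
         word_val (M \<alpha>) (e2 \<alpha>) (concat (map (z \<alpha>) u)) = word_val (M \<alpha>) (e2 \<alpha>) (concat (map (z \<alpha>) v))}" for \<alpha>
    unfolding K_def by (rule gsm_main(2)[OF finA hA PA zP F2(1) F2(2)])
  have zval: "word_val (M \<alpha>) (e2 \<alpha>) (concat (map (z \<alpha>) u)) = word_val (M \<alpha>) (f \<alpha>) u" if "u \<noteq> []" "set u \<subseteq> P \<alpha>" for u \<alpha>
  proof -
    have "word_val (M \<alpha>) (e2 \<alpha>) (concat (map (z \<alpha>) u)) = word_val (M \<alpha>) (\<lambda>a. word_val (M \<alpha>) (e2 \<alpha>) (z \<alpha> a)) u"
      by (rule wv_concat[OF sg]) (use that z F2(3) in blast)+
    also have "\<dots> = word_val (M \<alpha>) (f \<alpha>) u" using that z by (intro wv_cong) auto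
    finally show ?thesis .
  qed
  define R where "R \<alpha> = {w. set w \<subseteq> insert h A \<and> foldl (dfad {a\<in>A. \<not> \<alpha> \<le> fst (e a)} h) 0 w \<in> {3}}" for \<alpha>
  have Rreg: "regular_lang (R \<beta>)" for \<beta> unfolding R_def by (rule dfa_reg[OF finA])
  have Rmem: "set u \<subseteq> A \<Longrightarrow> set v \<subseteq> A \<Longrightarrow> u @ [h] @ v \<in> R \<beta> \<longleftrightarrow>
      (\<exists>a\<in>set u. \<not> \<beta> \<le> fst (e a)) \<and> (\<exists>a\<in>set v. \<not> \<beta> \<le> fst (e a))" for u v \<beta>
    unfolding R_def using dfa_mem[of u A v h "{a\<in>A. \<not> \<beta> \<le> fst (e a)}"] hA by auto
  define L where "L \<alpha> = K \<alpha> \<inter> (\<Inter>\<beta>\<in>{\<beta>. \<alpha> < \<beta>}. R \<beta>)" for \<alpha>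
  have LCl: "L \<alpha> \<in> Cl" for \<alpha>
    unfolding L_def by (rule inter_fin[OF ci _ KCl]) (use finite_subset[OF subset_UNIV finY] Rreg in auto)
  have snd_val: "snd (word_val mm e u) = word_val (M \<alpha>) (f \<alpha>) u"
    if "u \<noteq> []" "set u \<subseteq> A" "fst (word_val mm e u) = \<alpha>" for u \<alpha>
  proof -
    have inS: "word_val mm e u \<in> S" using wv_S[OF that(1) eSu[OF that(2)]] .
    then have sC: "snd (word_val mm e u) \<in> Cs \<alpha>" using that(3) by (cases "word_val mm e u") (auto simp: ssl_carrier_def)
    have "snd (word_val mm e u) = phi \<alpha> \<alpha> (snd (word_val mm e u))" using phi_id[OF sC] by simp
    also have "\<dots> = word_val (M \<alpha>) (\<lambda>a. phi (fst (e a)) \<alpha> (snd (e a))) u"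
      using L_phi[OF that(1) eSu[OF that(2)]] that(3) by auto
    also have "\<dots> = word_val (M \<alpha>) (f \<alpha>) u" by (rule wv_cong) (simp add: f_def)
    finally show ?thesis .
  qed
  have lev: "(\<beta> \<le> fst (word_val mm e u)) = (\<forall>a\<in>set u. \<beta> \<le> fst (e a))"
    if "u \<noteq> []" "set u \<subseteq> A" for u \<beta>
    using L_phi[OF that(1) eSu[OF that(2)]] by blast
  have WPeq: "word_problem mm A e h = (\<Union>\<alpha>\<in>UNIV. L \<alpha>)"
  proof
    show "word_problem mm A e h \<subseteq> (\<Union>\<alpha>\<in>UNIV. L \<alpha>)"
    proof
      fix x assume "x \<in> word_problem mm A e h"
      then obtain u v where uv: "x = u @ [h] @ rev v" "u \<noteq> []" "v \<noteq> []" "set u \<subseteq> A" "set v \<subseteq> A"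
        "word_val mm e u = word_val mm e v" unfolding word_problem_def by blast
      define \<alpha> where "\<alpha> = fst (word_val mm e u)"
      have av: "fst (word_val mm e v) = \<alpha>" using uv(6) \<alpha>_def by simp
      have Pu: "set u \<subseteq> P \<alpha>" using lev[OF uv(2,4), of \<alpha>] uv(4) \<alpha>_def by (auto simp: P_def)
      have Pv: "set v \<subseteq> P \<alpha>" using lev[OF uv(3,5), of \<alpha>] uv(5) av by (auto simp: P_def)
      have eqv: "word_val (M \<alpha>) (e2 \<alpha>) (concat (map (z \<alpha>) u)) = word_val (M \<alpha>) (e2 \<alpha>) (concat (map (z \<alpha>) v))"
        using zval[OF uv(2) Pu] zval[OF uv(3) Pv] snd_val[OF uv(2,4) \<alpha>_def[symmetric]] snd_val[OF uv(3,5) av] uv(6)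
        by simp
      have xK: "x \<in> K \<alpha>" unfolding Keq using uv(1,2,3) Pu Pv eqv by blast
      have xR: "x \<in> R \<beta>" if "\<alpha> < \<beta>" for \<beta>
      proof -
        have "\<exists>a\<in>set u. \<not> \<beta> \<le> fst (e a)"
        proof (rule ccontr)
          assume "\<not> ?thesis" then have "\<beta> \<le> \<alpha>" using lev[OF uv(2,4), of \<beta>] \<alpha>_def by auto
          then show False using that by simp
        qed
        moreover have "\<exists>a\<in>set (rev v). \<not> \<beta> \<le> fst (e a)"
        proof (rule ccontr)
          assume "\<not> ?thesis" then have "\<beta> \<le> \<alpha>" using lev[OF uv(3,5), of \<beta>] av by auto
          then show False using that by simp
        qed
        ultimately show ?thesis using Rmem[of u "rev v" \<beta>] uv by simp
      qed
      show "x \<in> (\<Union>\<alpha>\<in>UNIV. L \<alpha>)" unfolding L_def using xK xR by blast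
    qed
  next
    show "(\<Union>\<alpha>\<in>UNIV. L \<alpha>) \<subseteq> word_problem mm A e h"
    proof
      fix x assume "x \<in> (\<Union>\<alpha>\<in>UNIV. L \<alpha>)"
      then obtain \<alpha> where xK: "x \<in> K \<alpha>" and xR: "\<And>\<beta>. \<alpha> < \<beta> \<Longrightarrow> x \<in> R \<beta>" by (auto simp: L_def)
      from xK obtain u v where uv: "x = u @ [h] @ rev v" "u \<noteq> []" "v \<noteq> []" "set u \<subseteq> P \<alpha>" "set v \<subseteq> P \<alpha>"
        "word_val (M \<alpha>) (e2 \<alpha>) (concat (map (z \<alpha>) u)) = word_val (M \<alpha>) (e2 \<alpha>) (concat (map (z \<alpha>) v))"
        unfolding Keq by blast
      have uA: "set u \<subseteq> A" and vA: "set v \<subseteq> A" using uv(4,5) PA by blast+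
      have Ru: "\<exists>a\<in>set u. \<not> \<beta> \<le> fst (e a)" and Rv: "\<exists>a\<in>set v. \<not> \<beta> \<le> fst (e a)" if "\<alpha> < \<beta>" for \<beta>
        using xR[OF that] Rmem[OF uA, of "rev v" \<beta>] vA uv(1) by auto
      have fu: "fst (word_val mm e u) = \<alpha>"
      proof (rule ccontr)
        assume ne: "fst (word_val mm e u) \<noteq> \<alpha>"
        have "\<alpha> \<le> fst (word_val mm e u)" using lev[OF uv(2) uA, of \<alpha>] uv(4) by (auto simp: P_def)
        then have "\<alpha> < fst (word_val mm e u)" using ne by simp
        then obtain a where "a \<in> set u" "\<not> fst (word_val mm e u) \<le> fst (e a)" using Ru by blast
        then show False using lev[OF uv(2) uA, of "fst (word_val mm e u)"] by auto
      qed
      have fv: "fst (word_val mm e v) = \<alpha>"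
      proof (rule ccontr)
        assume ne: "fst (word_val mm e v) \<noteq> \<alpha>"
        have "\<alpha> \<le> fst (word_val mm e v)" using lev[OF uv(3) vA, of \<alpha>] uv(5) by (auto simp: P_def)
        then have "\<alpha> < fst (word_val mm e v)" using ne by simp
        then obtain a where "a \<in> set v" "\<not> fst (word_val mm e v) \<le> fst (e a)" using Rv by blast
        then show False using lev[OF uv(3) vA, of "fst (word_val mm e v)"] by auto
      qed
      have "snd (word_val mm e u) = snd (word_val mm e v)"
        using snd_val[OF uv(2) uA fu] snd_val[OF uv(3) vA fv] zval[OF uv(2,4)] zval[OF uv(3,5)] uv(6) by simp
      then have "word_val mm e u = word_val mm e v" using fu fv by (simp add: prod_eq_iff)
      then show "x \<in> word_problem mm A e h" unfolding word_problem_def using uv(1,2,3) uA vA by blast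
    qed
  qed
  have "word_problem mm A e h \<in> Cl" unfolding WPeq by (rule union_fin[OF cu finY]) (use LCl in auto)
  then show ?thesis unfolding U_class_def
    by (intro conjI ssl_semigroup exI[of _ A] exI[of _ e] exI[of _ h]) (use finA hA eA eS X(3) in simp_all)
qed

end


theorem mainTheorem11:
  fixes Cl :: "nat list set set"
    and Cs :: "'y::semilattice_inf \<Rightarrow> 'a set"
    and M :: "'y \<Rightarrow> 'a \<Rightarrow> 'a \<Rightarrow> 'a"
    and phi :: "'y \<Rightarrow> 'y \<Rightarrow> 'a \<Rightarrow> 'a"
  assumes "closed_finite_union Cl"
    and "closed_inverse_gsm Cl"
    and "closed_inter_regular Cl"
    and "strong_semilattice Cs M phi"
  shows "U_class Cl (ssl_carrier Cs) (ssl_mult M phi) \<longleftrightarrow>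
           fin_gen (ssl_carrier Cs) (ssl_mult M phi) \<and> (\<forall>\<alpha>. U_class Cl (Cs \<alpha>) (M \<alpha>))"
proof -
  interpret ssl Cs M phi by (rule ssl.intro) (rule assms(4))
  show ?thesis using fwd[OF assms(2)] bwd[OF assms(1,2,3)] by blast
qed

end
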